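(* Let $R$ be a local ring with maximal ideal $\mathcal{M}$ such that $\mathcal{M}^2=(0)$ and, as a left $R$-module, $\mathcal{M}=Ry_1\oplus\cdots\oplus Ry_t$ with $t\ge 2$, where each $Ry_i$ is a minimal left ideal of $R$. If there exist nonzero elements $x_1,x_2\in\mathcal{M}$ with $x_1R\cap x_2R=(0)$, then the left $R$-module $(R\oplus R)/R(x_1,x_2)$ is not a direct sum of cyclic modules.
   Context: All rings have identity and modules are unital. A ring $R$ is local if it has a unique maximal left ideal $\mathcal{M}$. Here $R(x_1,x_2)=\{(rx_1,rx_2): r\in R\}$ is the cyclic left submodule of $R\oplus R$ generated by $(x_1,x_2)$. *)

theory Defs
  imports Main
begin

definition left_ideal :: "'a::ring_1 set \<Rightarrow> bool" where
  "left_ideal I \<longleftrightarrow> 0 \<in> I \<and> (\<forall>a\<in>I. \<forall>b\<in>I. a + b \<in> I) \<and> (\<forall>r. \<forall>a\<in>I. r * a \<in> I)"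

definition maximal_left_ideal :: "'a::ring_1 set \<Rightarrow> bool" where
  "maximal_left_ideal M \<longleftrightarrow> left_ideal M \<and> M \<noteq> UNIV \<and>
     (\<forall>J. left_ideal J \<and> M \<subseteq> J \<and> J \<noteq> UNIV \<longrightarrow> J = M)"

definition local_ring :: "'a::ring_1 itself \<Rightarrow> bool" where
  "local_ring _ \<longleftrightarrow> (\<exists>!M::'a set. maximal_left_ideal M)"

definition minimal_left_ideal :: "'a::ring_1 set \<Rightarrow> bool" where
  "minimal_left_ideal I \<longleftrightarrow> left_ideal I \<and> I \<noteq> {0} \<and>
     (\<forall>J. left_ideal J \<and> J \<subseteq> I \<longrightarrow> J = {0} \<or> J = I)"

definition lcyc :: "'a::ring_1 \<Rightarrow> 'a set" where
  "lcyc y = {r * y | r. True}"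

definition rcyc :: "'a::ring_1 \<Rightarrow> 'a set" where
  "rcyc x = {x * r | r. True}"

definition internal_direct_sum_left :: "'a::ring_1 set \<Rightarrow> nat \<Rightarrow> (nat \<Rightarrow> 'a) \<Rightarrow> bool" where
  "internal_direct_sum_left M t y \<longleftrightarrow>
     M = {\<Sum>i<t. a i | a. \<forall>i<t. a i \<in> lcyc (y i)} \<and>
     (\<forall>a. (\<forall>i<t. a i \<in> lcyc (y i)) \<and> (\<Sum>i<t. a i) = 0 \<longrightarrow> (\<forall>i<t. a i = 0))"

definition smult2 :: "'a::ring_1 \<Rightarrow> 'a \<times> 'a \<Rightarrow> 'a \<times> 'a" where
  "smult2 r v = (r * fst v, r * snd v)"

definition add2 :: "'a::ring_1 \<times> 'a \<Rightarrow> 'a \<times> 'a \<Rightarrow> 'a \<times> 'a" where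
  "add2 v w = (fst v + fst w, snd v + snd w)"

definition diff2 :: "'a::ring_1 \<times> 'a \<Rightarrow> 'a \<times> 'a \<Rightarrow> 'a \<times> 'a" where
  "diff2 v w = (fst v - fst w, snd v - snd w)"

definition sum2 :: "('i \<Rightarrow> 'a::ring_1 \<times> 'a) \<Rightarrow> 'i set \<Rightarrow> 'a \<times> 'a" where
  "sum2 f F = ((\<Sum>i\<in>F. fst (f i)), (\<Sum>i\<in>F. snd (f i)))"

definition cyc2 :: "'a::ring_1 \<Rightarrow> 'a \<Rightarrow> ('a \<times> 'a) set" where
  "cyc2 x1 x2 = {smult2 r (x1, x2) | r. True}"

(* The quotient module (R (+) R)/N is the internal direct sum of the cyclic submodules
   R (g i + N), i \<in> I: every class is a finite sum of elements of the summands, and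
   a finite sum of elements of distinct summands vanishes only if every term does. *)
definition quotient_cyclic_decomposition ::
    "('a::ring_1 \<times> 'a) set \<Rightarrow> 'i set \<Rightarrow> ('i \<Rightarrow> 'a \<times> 'a) \<Rightarrow> bool" where
  "quotient_cyclic_decomposition N I g \<longleftrightarrow>
     (\<forall>v. \<exists>F r. F \<subseteq> I \<and> finite F \<and> diff2 v (sum2 (\<lambda>i. smult2 (r i) (g i)) F) \<in> N) \<and>
     (\<forall>F r. F \<subseteq> I \<and> finite F \<and> sum2 (\<lambda>i. smult2 (r i) (g i)) F \<in> N \<longrightarrow>
        (\<forall>i\<in>F. smult2 (r i) (g i) \<in> N))"

end

theory Submission
  imports Defs
begin

lemma one_notin:
  fixes M :: "'a::ring_1 set"
  assumes "maximal_left_ideal M" shows "1 \<notin> M"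
proof
  assume "1 \<in> M"
  then have "\<forall>r. r \<in> M" using assms unfolding maximal_left_ideal_def left_ideal_def
    by (metis mult.right_neutral)
  then show False using assms unfolding maximal_left_ideal_def by auto
qed

lemma sum_in:
  fixes M :: "'a::ring_1 set"
  assumes "left_ideal M" "finite F" "\<And>i. i \<in> F \<Longrightarrow> f i \<in> M"
  shows "(\<Sum>i\<in>F. f i) \<in> M"
  using assms(2,3)
proof (induction F rule: finite_induct)
  case empty then show ?case using assms(1) by (simp add: left_ideal_def)
next
  case (insert x F) then show ?case using assms(1) by (simp add: left_ideal_def)
qed

lemma left_inv:
  fixes M :: "'a::ring_1 set"
  assumes mx: "maximal_left_ideal M" and sq: "\<forall>a\<in>M. \<forall>b\<in>M. a * b = 0" and a: "a \<notin> M"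
  shows "\<exists>s. s * a = 1"
proof -
  have li: "left_ideal M" using mx by (simp add: maximal_left_ideal_def)
  define J where "J = {r * a + m | r m. m \<in> M}"
  have lJ: "left_ideal J" unfolding left_ideal_def J_def
  proof (intro conjI ballI allI)
    show "0 \<in> {r * a + m |r m. m \<in> M}" using li by (auto simp: left_ideal_def intro!: exI[of _ 0])
  next
    fix x y assume "x \<in> {r * a + m |r m. m \<in> M}" "y \<in> {r * a + m |r m. m \<in> M}"
    then obtain r m r' m' where "x = r * a + m" "m \<in> M" "y = r' * a + m'" "m' \<in> M" by auto
    then have "x + y = (r + r') * a + (m + m')" "m + m' \<in> M" using li unfolding left_ideal_def
      by (auto simp: algebra_simps)
    then show "x + y \<in> {r * a + m |r m. m \<in> M}" by blast
  next
    fix q x assume "x \<in> {r * a + m |r m. m \<in> M}"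
    then obtain r m where "x = r * a + m" "m \<in> M" by auto
    then have "q * x = (q * r) * a + q * m" "q * m \<in> M" using li unfolding left_ideal_def
      by (auto simp: algebra_simps)
    then show "q * x \<in> {r * a + m |r m. m \<in> M}" by blast
  qed
  have "M \<subseteq> J"
  proof
    fix x assume "x \<in> M" then have "x = 0 * a + x \<and> x \<in> M" by simp
    then show "x \<in> J" unfolding J_def by blast
  qed
  moreover have "a \<in> J"
  proof -
    have "a = 1 * a + 0 \<and> (0::'a) \<in> M" using li by (simp add: left_ideal_def)
    then show ?thesis unfolding J_def by blast
  qed
  ultimately have "J = UNIV" using mx lJ a unfolding maximal_left_ideal_def by blast
  then have "1 \<in> J" by simp
  then obtain r m where rm: "1 = r * a + m" "m \<in> M" unfolding J_def by auto
  have "(1 + m) * (1 - m) = 1" using sq rm(2) by (simp add: algebra_simps)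
  moreover have "1 - m = r * a" using rm(1) by (simp add: algebra_simps)
  ultimately have "((1 + m) * r) * a = 1" by (simp add: mult.assoc)
  then show ?thesis by blast
qed

lemma unit:
  fixes M :: "'a::ring_1 set"
  assumes mx: "maximal_left_ideal M" and sq: "\<forall>a\<in>M. \<forall>b\<in>M. a * b = 0" and a: "a \<notin> M"
  shows "\<exists>s. s * a = 1 \<and> a * s = 1"
proof -
  have li: "left_ideal M" using mx by (simp add: maximal_left_ideal_def)
  obtain s where s: "s * a = 1" using left_inv[OF mx sq a] by blast
  show ?thesis
  proof (cases "s \<in> M")
    case False
    then obtain s' where "s' * s = 1" using left_inv[OF mx sq] by blast
    then have "s' = a" by (metis s mult.assoc mult_1_left mult_1_right)
    then show ?thesis using s \<open>s' * s = 1\<close> by blast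
  next
    case True
    then have "a * s \<in> M" using li by (simp add: left_ideal_def)
    then have "(a * s) * (a * s) = 0" using sq by blast
    moreover have "(a * s) * (a * s) = a * s" by (metis s mult.assoc mult_1_right)
    ultimately have "a * s = 0" by simp
    then have "s = 0" by (metis s mult.assoc mult_1_left mult_zero_right)
    then have "(1::'a) = 0" using s by simp
    then have "\<forall>x::'a. x = 0" by (metis mult_1_left mult_zero_left)
    then have "1 \<in> M" using li by (metis left_ideal_def)
    then show ?thesis using one_notin[OF mx] by blast
  qed
qed


lemma ann0:
  fixes M :: "'a::ring_1 set"
  assumes mx: "maximal_left_ideal M" and sq: "\<forall>a\<in>M. \<forall>b\<in>M. a * b = 0"
    and x1: "x1 \<in> M" and x2: "x2 \<noteq> 0" and dj: "rcyc x1 \<inter> rcyc x2 = {0}"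
    and a: "a \<notin> M" and h: "smult2 r (a, b) \<in> cyc2 x1 x2"
  shows "r = 0"
proof -
  obtain c where c: "r * a = c * x1" "r * b = c * x2"
    using h by (auto simp: smult2_def cyc2_def)
  obtain a' where a': "a' * a = 1" "a * a' = 1" using unit[OF mx sq a] by blast
  show ?thesis
  proof (cases "c \<in> M")
    case True
    then have "r * a = 0" using c sq x1 by simp
    then show ?thesis by (metis a'(2) mult.assoc mult_1_right mult_zero_left)
  next
    case False
    obtain c' where c': "c' * c = 1" "c * c' = 1" using unit[OF mx sq False] by blast
    have e1: "x1 = c' * r * a" using c c' by (metis mult.assoc mult_1_left)
    have "x2 = c' * r * b" using c c' by (metis mult.assoc mult_1_left)
    also have "\<dots> = c' * r * a * (a' * b)" using a' by (metis mult.assoc mult_1_left)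
    also have "\<dots> = x1 * (a' * b)" using e1 by simp
    finally have "x2 \<in> rcyc x1" unfolding rcyc_def by blast
    moreover have "x2 \<in> rcyc x2" unfolding rcyc_def by (metis (mono_tags) mem_Collect_eq mult_1_right)
    ultimately show ?thesis using dj x2 by blast
  qed
qed

lemma ext_sum:
  fixes h :: "'i \<Rightarrow> 'a::ring_1"
  assumes "finite F" "F1 \<subseteq> F"
  shows "(\<Sum>i\<in>F. (if i \<in> F1 then r i else 0) * h i) = (\<Sum>i\<in>F1. r i * h i)"
proof -
  have "(\<Sum>i\<in>F. (if i \<in> F1 then r i else 0) * h i) = (\<Sum>i\<in>F. if i \<in> F1 then r i * h i else 0)"
    by (rule sum.cong) auto
  also have "\<dots> = (\<Sum>i\<in>F1. r i * h i)"
    using assms by (simp add: sum.If_cases Int_absorb1)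
  finally show ?thesis .
qed

theorem lemma2p1:
  fixes M :: "'a::ring_1 set" and t :: nat and y :: "nat \<Rightarrow> 'a" and x1 x2 :: 'a
    and I :: "'i set" and g :: "'i \<Rightarrow> 'a \<times> 'a"
  assumes "local_ring TYPE('a)"
    and mx: "maximal_left_ideal M"
    and sq: "\<forall>a\<in>M. \<forall>b\<in>M. a * b = 0"
    and "t \<ge> 2"
    and "\<forall>i<t. minimal_left_ideal (lcyc (y i))"
    and "internal_direct_sum_left M t y"
    and x1M: "x1 \<in> M" and x2M: "x2 \<in> M" and x1: "x1 \<noteq> 0" and x2: "x2 \<noteq> 0"
    and dj: "rcyc x1 \<inter> rcyc x2 = {0}"
  shows "\<not> quotient_cyclic_decomposition (cyc2 x1 x2) I g"
proof
  assume Q: "quotient_cyclic_decomposition (cyc2 x1 x2) I g"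
  have li: "left_ideal M" using mx by (simp add: maximal_left_ideal_def)
  define A where "A i = fst (g i)" for i
  define B where "B i = snd (g i)" for i
  have gAB: "g i = (A i, B i)" for i by (simp add: A_def B_def)
  obtain F1 r where F1: "F1 \<subseteq> I" "finite F1"
    and h1: "diff2 (1, 0) (sum2 (\<lambda>i. smult2 (r i) (g i)) F1) \<in> cyc2 x1 x2"
    using Q unfolding quotient_cyclic_decomposition_def by blast
  obtain F2 s where F2: "F2 \<subseteq> I" "finite F2"
    and h2: "diff2 (0, 1) (sum2 (\<lambda>i. smult2 (s i) (g i)) F2) \<in> cyc2 x1 x2"
    using Q unfolding quotient_cyclic_decomposition_def by blast
  have indep: "\<And>F \<rho>. F \<subseteq> I \<Longrightarrow> finite F \<Longrightarrow> sum2 (\<lambda>i. smult2 (\<rho> i) (g i)) F \<in> cyc2 x1 x2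
      \<Longrightarrow> \<forall>i\<in>F. smult2 (\<rho> i) (g i) \<in> cyc2 x1 x2"
    using Q unfolding quotient_cyclic_decomposition_def by blast
  obtain c1 where c1: "1 - (\<Sum>i\<in>F1. r i * A i) = c1 * x1" "- (\<Sum>i\<in>F1. r i * B i) = c1 * x2"
    using h1 by (auto simp: diff2_def sum2_def smult2_def cyc2_def A_def B_def)
  obtain c2 where c2: "- (\<Sum>i\<in>F2. s i * A i) = c2 * x1" "1 - (\<Sum>i\<in>F2. s i * B i) = c2 * x2"
    using h2 by (auto simp: diff2_def sum2_def smult2_def cyc2_def A_def B_def)
  obtain i0 where i0: "i0 \<in> F1" "A i0 \<notin> M"
  proof (rule ccontr)
    assume "\<not> thesis"
    then have "\<forall>i\<in>F1. A i \<in> M" using that by blast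
    then have "(\<Sum>i\<in>F1. r i * A i) \<in> M" using li F1(2)
      by (intro sum_in) (auto simp: left_ideal_def)
    moreover have "c1 * x1 \<in> M" using li x1M by (simp add: left_ideal_def)
    ultimately have "(\<Sum>i\<in>F1. r i * A i) + c1 * x1 \<in> M" using li by (simp add: left_ideal_def)
    moreover have "(\<Sum>i\<in>F1. r i * A i) + c1 * x1 = 1" using c1(1) by (simp add: algebra_simps)
    ultimately show False using one_notin[OF mx] by simp
  qed
  define F where "F = F1 \<union> F2"
  have F: "F \<subseteq> I" "finite F" "F1 \<subseteq> F" "F2 \<subseteq> F" "i0 \<in> F" using F1 F2 i0 by (auto simp: F_def)
  define R where "R i = (if i \<in> F1 then r i else 0)" for i
  define S where "S i = (if i \<in> F2 then s i else 0)" for i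
  have RA: "(\<Sum>i\<in>F. R i * A i) = 1 - c1 * x1" unfolding R_def ext_sum[OF F(2,3), of r A] using c1
    by (simp add: algebra_simps)
  have RB: "(\<Sum>i\<in>F. R i * B i) = - (c1 * x2)" unfolding R_def ext_sum[OF F(2,3), of r B] using c1
    by (metis minus_minus)
  have SA: "(\<Sum>i\<in>F. S i * A i) = - (c2 * x1)" unfolding S_def ext_sum[OF F(2,4), of s A] using c2
    by (metis minus_minus)
  have SB: "(\<Sum>i\<in>F. S i * B i) = 1 - c2 * x2" unfolding S_def ext_sum[OF F(2,4), of s B] using c2
    by (simp add: algebra_simps)
  define a where "a = A i0"
  define b where "b = B i0"
  define u where "u = R i0"
  define v where "v = S i0"
  have lin: "(\<Sum>i\<in>F. (p * R i + q * S i + (if i = i0 then w else 0)) * C i)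
      = p * (\<Sum>i\<in>F. R i * C i) + q * (\<Sum>i\<in>F. S i * C i) + w * C i0" for p q w C
  proof -
    have "(\<Sum>i\<in>F. (p * R i + q * S i + (if i = i0 then w else 0)) * C i)
      = (\<Sum>i\<in>F. p * (R i * C i)) + (\<Sum>i\<in>F. q * (S i * C i)) + (\<Sum>i\<in>F. (if i = i0 then w * C i else 0))"
    proof -
      have "(\<Sum>i\<in>F. (p * R i + q * S i + (if i = i0 then w else 0)) * C i)
        = (\<Sum>i\<in>F. p * (R i * C i) + q * (S i * C i) + (if i = i0 then w * C i else 0))"
        by (rule sum.cong) (auto simp: algebra_simps)
      then show ?thesis by (simp add: sum.distrib)
    qed
    also have "\<dots> = p * (\<Sum>i\<in>F. R i * C i) + q * (\<Sum>i\<in>F. S i * C i) + w * C i0"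
      using F(2,5) by (simp add: sum_distrib_left)
    finally show ?thesis .
  qed
  define \<rho> where "\<rho> i = x1 * R i + x2 * S i + (if i = i0 then 0 else 0)" for i
  have "sum2 (\<lambda>i. smult2 (\<rho> i) (g i)) F = smult2 (1 - (x1 * c1 + x2 * c2)) (x1, x2)"
    using lin[of x1 x2 0 A] lin[of x1 x2 0 B] RA RB SA SB
    by (simp add: sum2_def smult2_def gAB \<rho>_def algebra_simps)
  then have "sum2 (\<lambda>i. smult2 (\<rho> i) (g i)) F \<in> cyc2 x1 x2" unfolding cyc2_def by blast
  then have "smult2 (\<rho> i0) (a, b) \<in> cyc2 x1 x2" using indep[OF F(1,2)] F(5) by (simp add: gAB a_def b_def)
  then have "\<rho> i0 = 0" using ann0[OF mx sq x1M x2 dj] i0(2) a_def by blast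
  then have uv: "x1 * u + x2 * v = 0" by (simp add: \<rho>_def u_def v_def)
  define \<sigma> where "\<sigma> i = a * R i + b * S i + (if i = i0 then -1 else 0)" for i
  have "sum2 (\<lambda>i. smult2 (\<sigma> i) (g i)) F = smult2 (- (a * c1 + b * c2)) (x1, x2)"
    using lin[of a b "-1" A] lin[of a b "-1" B] RA RB SA SB
    by (simp add: sum2_def smult2_def gAB \<sigma>_def algebra_simps a_def b_def)
  then have "sum2 (\<lambda>i. smult2 (\<sigma> i) (g i)) F \<in> cyc2 x1 x2" unfolding cyc2_def by blast
  then have "smult2 (\<sigma> i0) (a, b) \<in> cyc2 x1 x2" using indep[OF F(1,2)] F(5) by (simp add: gAB a_def b_def)
  then have "\<sigma> i0 = 0" using ann0[OF mx sq x1M x2 dj] i0(2) a_def by blast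
  then have ab: "a * u + b * v = 1" by (simp add: \<sigma>_def u_def v_def)
  have "u \<notin> M \<or> v \<notin> M"
  proof (rule ccontr)
    assume "\<not> (u \<notin> M \<or> v \<notin> M)"
    then have "a * u + b * v \<in> M" using li by (simp add: left_ideal_def)
    then show False using ab one_notin[OF mx] by simp
  qed
  then show False
  proof
    assume "u \<notin> M"
    then obtain u' where u': "u * u' = 1" using unit[OF mx sq] by blast
    have "x1 = x1 * u * u'" using u' by (simp add: mult.assoc)
    also have "\<dots> = x2 * (- (v * u'))"
    proof -
      have "x1 * u = - (x2 * v)" using uv by (simp add: eq_neg_iff_add_eq_0)
      then show ?thesis by (simp add: mult.assoc)
    qed
    finally have "x1 \<in> rcyc x2" unfolding rcyc_def by blast
    moreover have "x1 \<in> rcyc x1" unfolding rcyc_def by (metis (mono_tags) mem_Collect_eq mult_1_right)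
    ultimately show False using dj x1 by blast
  next
    assume "v \<notin> M"
    then obtain v' where v': "v * v' = 1" using unit[OF mx sq] by blast
    have "x2 = x2 * v * v'" using v' by (simp add: mult.assoc)
    also have "\<dots> = x1 * (- (u * v'))"
    proof -
      have "x2 * v = - (x1 * u)" using uv by (simp add: eq_neg_iff_add_eq_0 add.commute)
      then show ?thesis by (simp add: mult.assoc)
    qed
    finally have "x2 \<in> rcyc x1" unfolding rcyc_def by blast
    moreover have "x2 \<in> rcyc x2" unfolding rcyc_def by (metis (mono_tags) mem_Collect_eq mult_1_right)
    ultimately show False using dj x2 by blast
  qed
qed

end
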